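(* Let $n\ge2$ and let $\omega\in\widetilde{S}_n$ avoid $231$. Let $\alpha\in\{1,\dots,n\}$ be the index with $\omega_\alpha=\max\{\omega_1,\dots,\omega_n\}$. Then $n\le\omega_\alpha\le n+\alpha-1$, and $u=\sigma_\ell^{\,\omega_\alpha-n}(\omega)$ satisfies $\{u_1,\dots,u_n\}=\{1,\dots,n\}$ (so $u$ restricts to an ordinary permutation of $\{1,\dots,n\}$) with $u_{i}=n$ for $i=\alpha-\omega_\alpha+n$. Conversely, if $u\in\widetilde{S}_n$ with $\{u_1,\dots,u_n\}=\{1,\dots,n\}$ avoids $231$ and $u_i=n$, then $\sigma_r^{\,j}(u)$ avoids $231$ for every $0\le j\le n-i$.
   Context: For $n\ge 2$, the affine symmetric group $\widetilde{S}_n$ is the set of bijections $\omega:\mathbb{Z}\to\mathbb{Z}$ such that $\omega(i+n)=\omega(i)+n$ for all $i\in\mathbb{Z}$ and $\sum_{i=1}^n\omega(i)=\binom{n+1}{2}$; write $\omega_i=\omega(i)$. The map $\sigma_r:\widetilde{S}_n\to\widetilde{S}_n$ is defined by $\sigma_r(\omega)_i=\omega_{i-1}+1$ for all $i\in\mathbb{Z}$ (so $\sigma_r(\omega)_1=\omega_n-n+1$), and $\sigma_\ell=\sigma_r^{-1}$. For $p\in S_k$, $\omega$ contains $p$ if there exist integers $i_1<\cdots<i_k$ such that $\omega_{i_1}\cdots\omega_{i_k}$ has the same relative order as $p_1\cdots p_k$; otherwise $\omega$ avoids $p$. *)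

theory Defs
  imports Main
begin

definition affine_perm :: "nat \<Rightarrow> (int \<Rightarrow> int) \<Rightarrow> bool" where
  "affine_perm n w \<longleftrightarrow> bij w \<and> (\<forall>i. w (i + int n) = w i + int n)
     \<and> (\<Sum>i=1..int n. w i) = int ((n + 1) choose 2)"

definition sigma_r :: "(int \<Rightarrow> int) \<Rightarrow> (int \<Rightarrow> int)" where
  "sigma_r w = (\<lambda>i. w (i - 1) + 1)"

definition sigma_l :: "(int \<Rightarrow> int) \<Rightarrow> (int \<Rightarrow> int)" where
  "sigma_l w = (\<lambda>i. w (i + 1) - 1)"

definition contains_pat :: "(int \<Rightarrow> int) \<Rightarrow> nat list \<Rightarrow> bool" where
  "contains_pat w p \<longleftrightarrow> (\<exists>idx :: nat \<Rightarrow> int.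
      (\<forall>a b. a < b \<and> b < length p \<longrightarrow> idx a < idx b) \<and>
      (\<forall>a < length p. \<forall>b < length p. (w (idx a) < w (idx b)) \<longleftrightarrow> (p ! a < p ! b)))"

definition avoids_pat :: "(int \<Rightarrow> int) \<Rightarrow> nat list \<Rightarrow> bool" where
  "avoids_pat w p \<longleftrightarrow> \<not> contains_pat w p"

end

theory Submission imports Defs begin

lemma pat231:
  fixes w :: "int \<Rightarrow> int"
  assumes "x < y" "y < z" "w z < w x" "w x < w y"
  shows "contains_pat w [2,3,1]"
  unfolding contains_pat_def
  apply (rule exI[of _ "\<lambda>a. if a = 0 then x else if a = 1 then y else z"])
  using assms by (auto simp: less_Suc_eq numeral_3_eq_3)

lemma shift_contains:
  assumes "contains_pat (\<lambda>i. u (i - c) + c) p"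
  shows "contains_pat u p"
proof -
  obtain idx where h1: "\<forall>a b. a < b \<and> b < length p \<longrightarrow> idx a < idx b"
    and h2: "\<forall>a < length p. \<forall>b < length p. (u (idx a - c) + c < u (idx b - c) + c) \<longleftrightarrow> (p ! a < p ! b)"
    using assms unfolding contains_pat_def by blast
  show ?thesis unfolding contains_pat_def
    apply (rule exI[of _ "\<lambda>a. idx a - c"])
    using h1 h2 by auto
qed

lemma sigma_r_pow: "(sigma_r ^^ j) u = (\<lambda>i. u (i - int j) + int j)"
  by (induction j) (auto simp: sigma_r_def algebra_simps)

lemma sigma_l_pow: "(sigma_l ^^ j) u = (\<lambda>i. u (i + int j) - int j)"
  by (induction j) (auto simp: sigma_l_def algebra_simps)

lemma gauss_int: "(\<Sum>i\<in>{1..int n}. i) = int ((n+1) choose 2)"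
proof (induction n)
  case 0 then show ?case by simp
next
  case (Suc n)
  have e: "{1..1 + int n} = insert (int n + 1) {1..int n}" by auto
  have c: "Suc (Suc n) choose 2 = Suc n + (Suc n choose 2)"
    by (simp add: numeral_2_eq_2)
  show ?case using Suc by (simp add: e c)
qed

lemma window_step:
  fixes f :: "int \<Rightarrow> int"
  assumes per: "\<And>i. f (i + int n) = f i + int n"
  shows "(\<Sum>i\<in>{a+2..a+1+int n}. f i) = (\<Sum>i\<in>{a+1..a+int n}. f i) + int n"
proof (cases "n = 0")
  case True then show ?thesis by simp
next
  case False
  have e1: "{a+1..a+1+int n} = insert (a+1+int n) {a+1..a+int n}" using False by auto
  have e2: "{a+1..a+1+int n} = insert (a+1) {a+2..a+1+int n}" using False by auto
  have "(\<Sum>i\<in>{a+1..a+1+int n}. f i) = f (a+1+int n) + (\<Sum>i\<in>{a+1..a+int n}. f i)"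
    by (subst e1) simp
  moreover have "(\<Sum>i\<in>{a+1..a+1+int n}. f i) = f (a+1) + (\<Sum>i\<in>{a+2..a+1+int n}. f i)"
    by (subst e2) simp
  moreover have "f (a+1+int n) = f (a+1) + int n" using per[of "a+1"] by simp
  ultimately show ?thesis by linarith
qed

lemma window_sum:
  fixes f :: "int \<Rightarrow> int"
  assumes per: "\<And>i. f (i + int n) = f i + int n"
  shows "(\<Sum>i\<in>{a+1..a+int n}. f i) = (\<Sum>i\<in>{1..int n}. f i) + a * int n"
proof (induction a rule: int_induct[where k=0])
  case base then show ?case by simp
next
  case (step1 i)
  have "(\<Sum>i\<in>{i+1+1..i+1+int n}. f i) = (\<Sum>i\<in>{i+1..i+int n}. f i) + int n"
    using window_step[of f n, OF per, of i] by (simp add: add.assoc)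
  then show ?case using step1 by (simp add: algebra_simps)
next
  case (step2 i)
  have "(\<Sum>i\<in>{i-1+2..i-1+1+int n}. f i) = (\<Sum>i\<in>{i-1+1..i-1+int n}. f i) + int n"
    using window_step[of f n, OF per, of "i-1"] by simp
  then show ?case using step2 by (simp add: algebra_simps)
qed

lemma part1:
  fixes w :: "int \<Rightarrow> int" and n :: nat and \<alpha> :: int
  assumes n2: "n \<ge> 2" and ap: "affine_perm n w" and av: "avoids_pat w [2,3,1]"
    and al: "\<alpha> \<in> {1..int n}" and MM: "w \<alpha> = Max (w ` {1..int n})"
  shows "int n \<le> w \<alpha> \<and> w \<alpha> \<le> int n + \<alpha> - 1 \<and>
     w ` {w \<alpha> - int n + 1..w \<alpha>} = {w \<alpha> - int n + 1..w \<alpha>}"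
proof -
  define M where "M = w \<alpha>"
  have inj: "inj w" using ap bij_is_inj unfolding affine_perm_def by auto
  have per: "\<And>i. w (i + int n) = w i + int n" using ap unfolding affine_perm_def by auto
  have sumw: "(\<Sum>i\<in>{1..int n}. w i) = int ((n+1) choose 2)"
    using ap unfolding affine_perm_def by auto
  have le: "\<And>j. j \<in> {1..int n} \<Longrightarrow> w j \<le> M"
    unfolding M_def MM by (rule Max_ge) auto
  have neq: "\<And>p. p \<noteq> \<alpha> \<Longrightarrow> w p \<noteq> M" unfolding M_def using inj by (metis injD)
  have nc: "\<not> contains_pat w [2,3,1]" using av unfolding avoids_pat_def by auto
  have A: "w p < M" if "\<alpha> - int n < p" "p < \<alpha>" for p
  proof (cases "p \<ge> 1")
    case True
    then have "w p \<le> M" using le that al by auto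
    then show ?thesis using neq[of p] that by auto
  next
    case False
    then have "w (p + int n) \<le> M" using le that al by auto
    then show ?thesis using per[of p] n2 by auto
  qed
  have wm: "w (\<alpha> - int n) = M - int n" using per[of "\<alpha> - int n"] M_def by simp
  have B: "w r > M - int n" if "\<alpha> < r" for r
  proof (rule ccontr)
    assume "\<not> w r > M - int n"
    moreover have "w r \<noteq> w (\<alpha> - int n)" proof
      assume "w r = w (\<alpha> - int n)"
      then have "r = \<alpha> - int n" using inj by (simp add: inj_eq)
      then show False using that n2 by simp
    qed
    ultimately have "w r < w (\<alpha> - int n)" using wm by auto
    moreover have "w (\<alpha> - int n) < w \<alpha>" using wm M_def n2 by simp
    ultimately have "contains_pat w [2,3,1]"
      by (intro pat231[of "\<alpha> - int n" \<alpha> r]) (use that n2 in auto)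
    then show False using nc by simp
  qed
  have C: "w p > M" if "\<alpha> < q" "q < p" "w q > M" for p q
  proof (rule ccontr)
    assume "\<not> w p > M"
    then have "w p < M" using neq[of p] that by fastforce
    then have "contains_pat w [2,3,1]"
      by (intro pat231[of \<alpha> q p]) (use that M_def in auto)
    then show False using nc by simp
  qed
  define d where "d = (LEAST d::nat. w (\<alpha> + 1 + int d) > M)"
  have ex: "w (\<alpha> + 1 + int (n-1)) > M"
  proof -
    have "\<alpha> + 1 + int (n-1) = \<alpha> + int n" using n2 by simp
    then show ?thesis using per[of \<alpha>] M_def n2 by simp
  qed
  have d1: "w (\<alpha> + 1 + int d) > M" unfolding d_def using ex by (rule LeastI)
  have dle: "d \<le> n - 1" unfolding d_def using ex by (rule Least_le)
  have d2: "\<not> w (\<alpha> + 1 + int e) > M" if "e < d" for e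
    using not_less_Least[of e "\<lambda>d. w (\<alpha> + 1 + int d) > M"] that d_def by auto
  define t where "t = \<alpha> + 1 + int d"
  have below: "w p < M" if "\<alpha> < p" "p < t" for p
  proof -
    have "p = \<alpha> + 1 + int (nat (p - \<alpha> - 1))" using that by simp
    moreover have "nat (p - \<alpha> - 1) < d" using that t_def by auto
    ultimately have "\<not> w p > M" using d2 by metis
    then show ?thesis using neq[of p] that by fastforce
  qed
  have above: "w p > M" if "t \<le> p" for p
  proof (cases "p = t")
    case True then show ?thesis using d1 t_def by simp
  next
    case False then show ?thesis using C[of t p] d1 t_def that by auto
  qed
  have win: "M - int n + 1 \<le> w p \<and> w p \<le> M" if "t - int n \<le> p" "p \<le> t - 1" for p
  proof -
    consider "p < \<alpha>" | "p = \<alpha>" | "p > \<alpha>" by fastforce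
    then show ?thesis
    proof cases
      case 1
      have "\<alpha> - int n < p" using that t_def by auto
      then have u: "w p < M" using A 1 by auto
      have "w (p + int n) > M" using above that by auto
      then show ?thesis using u per[of p] by auto
    next
      case 2 then show ?thesis using M_def n2 by auto
    next
      case 3
      then show ?thesis using below[of p] B[of p] that by auto
    qed
  qed
  let ?W = "{t - int n..t - 1}"
  let ?V = "{M - int n + 1..M}"
  have sub: "w ` ?W \<subseteq> ?V" using win by auto
  have cW: "card (w ` ?W) = n" proof -
    have "inj_on w ?W" using inj inj_on_subset by blast
    then have "card (w ` ?W) = card ?W" by (rule card_image)
    then show ?thesis by simp
  qed
  have img: "w ` ?W = ?V"
    by (rule card_subset_eq) (use sub cW in auto)
  have s1: "(\<Sum>i\<in>?W. w i) = (\<Sum>v\<in>?V. v)"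
    proof -
    have "inj_on w ?W" using inj inj_on_subset by blast
    then have "(\<Sum>v\<in>w ` ?W. v) = (\<Sum>i\<in>?W. w i)" by (simp add: sum.reindex)
    then show ?thesis using img by simp
  qed
  have s2: "(\<Sum>i\<in>?W. w i) = int ((n+1) choose 2) + (t - int n - 1) * int n"
    using window_sum[of w n "t - int n - 1", OF per] sumw by simp
  have s3: "(\<Sum>v\<in>?V. v) = int ((n+1) choose 2) + (M - int n) * int n"
    using window_sum[of "\<lambda>v. v" n "M - int n"] gauss_int[of n] by simp
  have "(t - int n - 1) * int n = (M - int n) * int n" using s1 s2 s3 by simp
  then have tM: "t = M + 1" using n2 by simp
  have r1: "M \<le> int n + \<alpha> - 1" using tM t_def dle n2 by auto
  have r2: "int n \<le> M"
  proof (rule ccontr)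
    assume "\<not> int n \<le> M"
    then have "w (int n) > M" using above tM by auto
    moreover have "w (int n) \<le> M" using le n2 by auto
    ultimately show False by simp
  qed
  have "?W = ?V" using tM by (intro arg_cong2[where f=atLeastAtMost]) simp_all
  then have "w ` ?V = ?V" using img by metis
  then show ?thesis using r1 r2 M_def by simp
qed


theorem mainTheorem9:
  fixes n :: nat
  assumes "n \<ge> 2"
  shows
   "(\<forall>w \<alpha>. affine_perm n w \<and> avoids_pat w [2,3,1] \<and> \<alpha> \<in> {1..int n}
        \<and> w \<alpha> = Max (w ` {1..int n}) \<longrightarrow>
       int n \<le> w \<alpha> \<and> w \<alpha> \<le> int n + \<alpha> - 1 \<and>
       (let u = (sigma_l ^^ nat (w \<alpha> - int n)) w in
          u ` {1..int n} = {1..int n} \<and> u (\<alpha> - w \<alpha> + int n) = int n))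
    \<and>
    (\<forall>u i. affine_perm n u \<and> u ` {1..int n} = {1..int n} \<and> avoids_pat u [2,3,1]
        \<and> i \<in> {1..int n} \<and> u i = int n \<longrightarrow>
       (\<forall>j::nat. int j \<le> int n - i \<longrightarrow> avoids_pat ((sigma_r ^^ j) u) [2,3,1]))"
proof (rule conjI; intro allI impI)
  fix w \<alpha>
  assume h: "affine_perm n w \<and> avoids_pat w [2,3,1] \<and> \<alpha> \<in> {1..int n}
        \<and> w \<alpha> = Max (w ` {1..int n})"
  have P: "int n \<le> w \<alpha> \<and> w \<alpha> \<le> int n + \<alpha> - 1 \<and>
     w ` {w \<alpha> - int n + 1..w \<alpha>} = {w \<alpha> - int n + 1..w \<alpha>}"
    using part1[of n w \<alpha>] h assms by blast
  define k where "k = w \<alpha> - int n"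
  have k0: "int (nat k) = k" using P k_def by simp
  define u where "u = (sigma_l ^^ nat k) w"
  have u: "\<And>i. u i = w (i + k) - k" unfolding u_def sigma_l_pow k0 by simp
  have e: "{k + 1..k + int n} = {w \<alpha> - int n + 1..w \<alpha>}" unfolding k_def
    by (intro arg_cong2[where f=atLeastAtMost]) simp_all
  have img: "w ` {k + 1..k + int n} = {k + 1..k + int n}" unfolding e using P by blast
  have "u ` {1..int n} = {1..int n}"
  proof
    show "u ` {1..int n} \<subseteq> {1..int n}"
    proof
      fix y assume "y \<in> u ` {1..int n}"
      then obtain x where x: "x \<in> {1..int n}" "y = u x" by blast
      then have "w (x + k) \<in> {k + 1..k + int n}" using img by auto
      then show "y \<in> {1..int n}" using x u by auto
    qed
  next
    show "{1..int n} \<subseteq> u ` {1..int n}"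
    proof
      fix y assume y: "y \<in> {1..int n}"
      then have "y + k \<in> w ` {k + 1..k + int n}" using img by auto
      then obtain j where j: "j \<in> {k + 1..k + int n}" "w j = y + k" by (metis imageE)
      then have "u (j - k) = y" using u by simp
      moreover have "j - k \<in> {1..int n}" using j by auto
      ultimately show "y \<in> u ` {1..int n}" by (metis imageI)
    qed
  qed
  moreover have "u (\<alpha> - w \<alpha> + int n) = int n" using u k_def by simp
  ultimately show "int n \<le> w \<alpha> \<and> w \<alpha> \<le> int n + \<alpha> - 1 \<and>
       (let u = (sigma_l ^^ nat (w \<alpha> - int n)) w in
          u ` {1..int n} = {1..int n} \<and> u (\<alpha> - w \<alpha> + int n) = int n)"
    using P unfolding u_def k_def Let_def by blast
next
  fix u i j
  assume h: "affine_perm n u \<and> u ` {1..int n} = {1..int n} \<and> avoids_pat u [2,3,1]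
        \<and> i \<in> {1..int n} \<and> u i = int n"
  show "avoids_pat ((sigma_r ^^ j) u) [2,3,1]"
    unfolding avoids_pat_def sigma_r_pow
    using shift_contains[of u "int j" "[2,3,1]"] h unfolding avoids_pat_def by blast
qed

end
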